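(* For any VSCC $F$, the following are equivalent: (1) $F$ satisfies Pure IIA; (2) $F$ is defeat-rationalized by some VCCR satisfying IIA.
   Context: Profiles: $\mathbf P:V\to\mathcal L(X)$, $V$ nonempty finite set of voters, $X=X(\mathbf P)$ nonempty finite set of candidates (from fixed infinite sets), $\mathcal L(X)$ strict linear orders; $\mathbf P_{|Y}$ is the profile with each ballot restricted to $Y$. A VCCR is a function $f$ assigning to each profile an asymmetric relation $f(\mathbf P)$ on $X(\mathbf P)$ ($x$ defeats $y$ iff $(x,y)\in f(\mathbf P)$). A VSCC is a function $F$ with $\varnothing\ne F(\mathbf P)\subseteq X(\mathbf P)$ for every profile. $F$ is defeat-rationalized by $f$ if for every profile $\mathbf P$, $F(\mathbf P)=\{x\in X(\mathbf P): \text{no } y\in X(\mathbf P) \text{ with } (y,x)\in f(\mathbf P)\}$. A VCCR $f$ satisfies IIA if whenever $(x,y)\in f(\mathbf P)$ and $\mathbf P_{|\{x,y\}}=\mathbf P'_{|\{x,y\}}$, then $(x,y)\in f(\mathbf P')$. A VSCC $F$ satisfies Pure IIA if for every profile $\mathbf P$ and $y\in X(\mathbf P)$ with $y\notin F(\mathbf P)$ there is $x\in X(\mathbf P)$ such that $y\notin F(\mathbf P')$ for every profile $\mathbf P'$ with $\mathbf P_{|\{x,y\}}=\mathbf P'_{|\{x,y\}}$. *)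

theory Defs
  imports Main
begin

text \<open>A profile is a triple (V, X, P): voters V, candidates X, and for each voter
  a ballot (strict linear order on X, as a relation; (a,b) in P i means voter i ranks a above b).
  Outside V the ballot is fixed to the empty relation so that profiles are canonical.\<close>

type_synonym ('v, 'c) profile = "'v set \<times> 'c set \<times> ('v \<Rightarrow> ('c \<times> 'c) set)"

definition voters :: "('v, 'c) profile \<Rightarrow> 'v set" where
  "voters Pr = fst Pr"

definition cands :: "('v, 'c) profile \<Rightarrow> 'c set" where
  "cands Pr = fst (snd Pr)"

definition ballot :: "('v, 'c) profile \<Rightarrow> 'v \<Rightarrow> ('c \<times> 'c) set" where
  "ballot Pr = snd (snd Pr)"

definition strict_lin_order :: "'c set \<Rightarrow> ('c \<times> 'c) set \<Rightarrow> bool" where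
  "strict_lin_order X R \<longleftrightarrow> R \<subseteq> X \<times> X \<and> irrefl R \<and> trans R \<and> total_on X R"

definition is_profile :: "('v, 'c) profile \<Rightarrow> bool" where
  "is_profile Pr \<longleftrightarrow>
     finite (voters Pr) \<and> voters Pr \<noteq> {} \<and> finite (cands Pr) \<and> cands Pr \<noteq> {} \<and>
     (\<forall>i \<in> voters Pr. strict_lin_order (cands Pr) (ballot Pr i)) \<and>
     (\<forall>i. i \<notin> voters Pr \<longrightarrow> ballot Pr i = {})"

definition restrict_prof :: "('v, 'c) profile \<Rightarrow> 'c set \<Rightarrow> ('v, 'c) profile" where
  "restrict_prof Pr Y = (voters Pr, cands Pr \<inter> Y, \<lambda>i. ballot Pr i \<inter> (Y \<times> Y))"

definition is_VCCR :: "(('v, 'c) profile \<Rightarrow> ('c \<times> 'c) set) \<Rightarrow> bool" where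
  "is_VCCR f \<longleftrightarrow> (\<forall>Pr. is_profile Pr \<longrightarrow>
     f Pr \<subseteq> cands Pr \<times> cands Pr \<and> (\<forall>x y. (x, y) \<in> f Pr \<longrightarrow> (y, x) \<notin> f Pr))"

definition is_VSCC :: "(('v, 'c) profile \<Rightarrow> 'c set) \<Rightarrow> bool" where
  "is_VSCC F \<longleftrightarrow> (\<forall>Pr. is_profile Pr \<longrightarrow> F Pr \<noteq> {} \<and> F Pr \<subseteq> cands Pr)"

definition defeat_rationalized :: "(('v, 'c) profile \<Rightarrow> 'c set) \<Rightarrow> (('v, 'c) profile \<Rightarrow> ('c \<times> 'c) set) \<Rightarrow> bool" where
  "defeat_rationalized F f \<longleftrightarrow> (\<forall>Pr. is_profile Pr \<longrightarrow>
     F Pr = {x \<in> cands Pr. \<not> (\<exists>y \<in> cands Pr. (y, x) \<in> f Pr)})"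

definition VCCR_IIA :: "(('v, 'c) profile \<Rightarrow> ('c \<times> 'c) set) \<Rightarrow> bool" where
  "VCCR_IIA f \<longleftrightarrow> (\<forall>Pr Pr' x y. is_profile Pr \<and> is_profile Pr' \<and> (x, y) \<in> f Pr \<and>
     restrict_prof Pr {x, y} = restrict_prof Pr' {x, y} \<longrightarrow> (x, y) \<in> f Pr')"

definition pure_IIA :: "(('v, 'c) profile \<Rightarrow> 'c set) \<Rightarrow> bool" where
  "pure_IIA F \<longleftrightarrow> (\<forall>Pr y. is_profile Pr \<and> y \<in> cands Pr \<and> y \<notin> F Pr \<longrightarrow>
     (\<exists>x \<in> cands Pr. \<forall>Pr'. is_profile Pr' \<and> restrict_prof Pr {x, y} = restrict_prof Pr' {x, y}
        \<longrightarrow> y \<notin> F Pr'))"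

end

theory Submission
  imports Defs
begin

lemma restrict_restrict: "restrict_prof (restrict_prof Pr Y) Y = restrict_prof Pr Y"
  unfolding restrict_prof_def voters_def cands_def ballot_def by auto

lemma restrict_profile:
  assumes "is_profile Pr" "Y \<inter> cands Pr \<noteq> {}"
  shows "is_profile (restrict_prof Pr Y)"
proof -
  have slo: "strict_lin_order (cands Pr \<inter> Y) (ballot Pr i \<inter> (Y \<times> Y))" if "i \<in> voters Pr" for i
  proof -
    have "strict_lin_order (cands Pr) (ballot Pr i)" using assms that unfolding is_profile_def by auto
    then show ?thesis unfolding strict_lin_order_def irrefl_def trans_def total_on_def by blast
  qed
  have e: "voters (restrict_prof Pr Y) = voters Pr" "cands (restrict_prof Pr Y) = cands Pr \<inter> Y"
    "ballot (restrict_prof Pr Y) = (\<lambda>i. ballot Pr i \<inter> (Y \<times> Y))"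
    unfolding restrict_prof_def voters_def cands_def ballot_def by simp_all
  have "finite (voters Pr)" "voters Pr \<noteq> {}" "finite (cands Pr)"
    "\<forall>i. i \<notin> voters Pr \<longrightarrow> ballot Pr i = {}" using assms(1) unfolding is_profile_def by blast+
  then show ?thesis unfolding is_profile_def e using slo assms(2) by auto
qed

lemma restrict_cands: "restrict_prof Pr Y = restrict_prof Pr' Y \<Longrightarrow> cands Pr \<inter> Y = cands Pr' \<inter> Y"
  unfolding restrict_prof_def cands_def by auto

theorem proposition5p4:
  fixes F :: "('v, 'c) profile \<Rightarrow> 'c set"
  assumes "infinite (UNIV :: 'v set)" and "infinite (UNIV :: 'c set)"
  assumes "is_VSCC F"
  shows "pure_IIA F \<longleftrightarrow> (\<exists>f. is_VCCR f \<and> VCCR_IIA f \<and> defeat_rationalized F f)"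
proof
  assume P: "pure_IIA F"
  define f where "f = (\<lambda>Pr::('v,'c) profile. {(x,y). x \<in> cands Pr \<and> y \<in> cands Pr \<and>
     (\<forall>Pr'. is_profile Pr' \<and> restrict_prof Pr {x, y} = restrict_prof Pr' {x, y} \<longrightarrow> y \<notin> F Pr')})"
  have asym: "(y, x) \<notin> f Pr" if "is_profile Pr" "(x, y) \<in> f Pr" for Pr x y
  proof
    assume yx: "(y, x) \<in> f Pr"
    define P0 where "P0 = restrict_prof Pr {x, y}"
    have xy: "x \<in> cands Pr" "y \<in> cands Pr" using that(2) unfolding f_def by blast+
    have p0: "is_profile P0" unfolding P0_def by (rule restrict_profile[OF that(1)]) (use xy in blast)
    have r: "restrict_prof Pr {x, y} = restrict_prof P0 {x, y}" unfolding P0_def by (simp add: restrict_restrict)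
    have r2: "restrict_prof Pr {y, x} = restrict_prof P0 {y, x}" using r by (simp add: insert_commute)
    have h1: "\<forall>Pr'. is_profile Pr' \<and> restrict_prof Pr {x, y} = restrict_prof Pr' {x, y} \<longrightarrow> y \<notin> F Pr'"
      using that(2) unfolding f_def by blast
    have h2: "\<forall>Pr'. is_profile Pr' \<and> restrict_prof Pr {y, x} = restrict_prof Pr' {y, x} \<longrightarrow> x \<notin> F Pr'"
      using yx unfolding f_def by blast
    have "y \<notin> F P0" using h1 p0 r by blast
    moreover have "x \<notin> F P0" using h2 p0 r2 by blast
    moreover have "F P0 \<noteq> {} \<and> F P0 \<subseteq> cands P0" using assms(3) p0 unfolding is_VSCC_def by blast
    moreover have "cands P0 \<subseteq> {x, y}" unfolding P0_def restrict_prof_def cands_def by auto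
    ultimately show False by blast
  qed
  have "is_VCCR f" unfolding is_VCCR_def
  proof (intro allI impI)
    fix Pr :: "('v,'c) profile" assume "is_profile Pr"
    have "f Pr \<subseteq> cands Pr \<times> cands Pr" unfolding f_def by blast
    moreover have "\<forall>x y. (x, y) \<in> f Pr \<longrightarrow> (y, x) \<notin> f Pr" using asym \<open>is_profile Pr\<close> by blast
    ultimately show "f Pr \<subseteq> cands Pr \<times> cands Pr \<and> (\<forall>x y. (x, y) \<in> f Pr \<longrightarrow> (y, x) \<notin> f Pr)" by blast
  qed
  moreover have "VCCR_IIA f"
    unfolding VCCR_IIA_def
  proof (intro allI impI)
    fix Pr Pr' x y
    assume a: "is_profile Pr \<and> is_profile Pr' \<and> (x, y) \<in> f Pr \<and> restrict_prof Pr {x, y} = restrict_prof Pr' {x, y}"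
    then have "cands Pr \<inter> {x,y} = cands Pr' \<inter> {x,y}" using restrict_cands by blast
    then show "(x, y) \<in> f Pr'" using a unfolding f_def by auto
  qed
  moreover have "defeat_rationalized F f"
    unfolding defeat_rationalized_def
  proof (intro allI impI)
    fix Pr :: "('v,'c) profile"
    assume pr: "is_profile Pr"
    have sub: "F Pr \<subseteq> cands Pr" using assms(3) pr unfolding is_VSCC_def by blast
    show "F Pr = {x \<in> cands Pr. \<not> (\<exists>y \<in> cands Pr. (y, x) \<in> f Pr)}"
    proof
      show "F Pr \<subseteq> {x \<in> cands Pr. \<not> (\<exists>y \<in> cands Pr. (y, x) \<in> f Pr)}"
      proof
        fix x assume xF: "x \<in> F Pr"
        have "\<not> (\<exists>y \<in> cands Pr. (y, x) \<in> f Pr)"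
        proof
          assume "\<exists>y \<in> cands Pr. (y, x) \<in> f Pr"
          then obtain y where "(y, x) \<in> f Pr" by blast
          then have "\<forall>Pr'. is_profile Pr' \<and> restrict_prof Pr {y, x} = restrict_prof Pr' {y, x} \<longrightarrow> x \<notin> F Pr'"
            unfolding f_def by blast
          then show False using pr xF by blast
        qed
        then show "x \<in> {x \<in> cands Pr. \<not> (\<exists>y \<in> cands Pr. (y, x) \<in> f Pr)}" using sub xF by blast
      qed
    next
      show "{x \<in> cands Pr. \<not> (\<exists>y \<in> cands Pr. (y, x) \<in> f Pr)} \<subseteq> F Pr"
      proof
        fix x assume x: "x \<in> {x \<in> cands Pr. \<not> (\<exists>y \<in> cands Pr. (y, x) \<in> f Pr)}"
        show "x \<in> F Pr"
        proof (rule ccontr)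
          assume "x \<notin> F Pr"
          then obtain y where "y \<in> cands Pr" and
            h: "\<forall>Pr'. is_profile Pr' \<and> restrict_prof Pr {y, x} = restrict_prof Pr' {y, x} \<longrightarrow> x \<notin> F Pr'"
            using P pr x unfolding pure_IIA_def by blast
          then have "(y, x) \<in> f Pr" using x unfolding f_def by auto
          then show False using x \<open>y \<in> cands Pr\<close> by blast
        qed
      qed
    qed
  qed
  ultimately show "\<exists>f. is_VCCR f \<and> VCCR_IIA f \<and> defeat_rationalized F f" by blast
next
  assume "\<exists>f. is_VCCR f \<and> VCCR_IIA f \<and> defeat_rationalized F f"
  then obtain f where f: "is_VCCR f" "VCCR_IIA f" "defeat_rationalized F f" by blast
  show "pure_IIA F"
    unfolding pure_IIA_def
  proof (intro allI impI)
    fix Pr y assume a: "is_profile Pr \<and> y \<in> cands Pr \<and> y \<notin> F Pr"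
    then obtain x where x: "x \<in> cands Pr" "(x, y) \<in> f Pr"
    proof -
      have "F Pr = {x \<in> cands Pr. \<not> (\<exists>y \<in> cands Pr. (y, x) \<in> f Pr)}"
        using f(3) a unfolding defeat_rationalized_def by blast
      then show ?thesis using a that by blast
    qed
    show "\<exists>x \<in> cands Pr. \<forall>Pr'. is_profile Pr' \<and> restrict_prof Pr {x, y} = restrict_prof Pr' {x, y}
        \<longrightarrow> y \<notin> F Pr'"
    proof (intro bexI[OF _ x(1)] allI impI)
      fix Pr' assume b: "is_profile Pr' \<and> restrict_prof Pr {x, y} = restrict_prof Pr' {x, y}"
      then have "(x, y) \<in> f Pr'" using f(2) a x unfolding VCCR_IIA_def by blast
      moreover have "x \<in> cands Pr'" using restrict_cands[of Pr "{x,y}" Pr'] b x by auto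
      moreover have "F Pr' = {x \<in> cands Pr'. \<not> (\<exists>y \<in> cands Pr'. (y, x) \<in> f Pr')}"
        using f(3) b unfolding defeat_rationalized_def by blast
      ultimately show "y \<notin> F Pr'" by blast
    qed
  qed
qed

end
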